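(* Assume the setting of the context, with $\lambda_d=C-\bar\lambda$, $\rho=\bar\lambda/C\in(0,1)$, and buffer size $K=\dot{\mathbf K}=b\bar\lambda\left[\frac{\alpha}{\beta}\left(\frac{\rho}{1-\rho}-1\right)-1\right]\ge 0$, and let $\mathbf P_d=1-\rho$. Let $\dot{\mathbf D}_q$ be the waiting time of admitted fluid as defined in the context, and let $\dot{\mathbf D}=aG+\dot{\mathbf D}_q$ where $a>0$ is a constant and $G$ is independent of $\dot{\mathbf D}_q$ with $\Pr\{G=g\}=\mathbf P_d^{\,g}(1-\mathbf P_d)$, $g=0,1,2,\dots$. Then $$E[\dot{\mathbf D}]=a\frac{1-\rho}{\rho}+E[\dot{\mathbf D}_q],\qquad \mathrm{var}[\dot{\mathbf D}]=a^2\frac{1-\rho}{\rho^2}+\mathrm{var}[\dot{\mathbf D}_q],$$ where $$E[\dot{\mathbf D}_q]=b\cdot\frac{\left[\left(2\frac{\alpha}{\beta}+1\right)\rho-\left(1+\frac{\alpha}{\beta}\right)\right]\left[\left(2-\frac{\beta}{\alpha}\right)\rho+\left(\frac{\beta}{\alpha}-1\right)\right]}{2\rho(1-\rho)},$$ $$E[\dot{\mathbf D}_q^2]=b^2\cdot\frac{\left[(2\rho-1)\frac{\alpha}{\beta}-(1-\rho)\right]^2\left[(1-\rho)\frac{2\beta}{\alpha}+2\rho-1\right]}{3(1-\rho)^2}.$$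
   Context: Fluid queue model: $\alpha,\beta>0$, $b=1/(\alpha+\beta)$, $\hat\lambda>0$, $\bar\lambda=\hat\lambda\beta/(\alpha+\beta)$, $C>\bar\lambda$, $\lambda_d\ge0$. A buffer of capacity $K$ is drained at rate $C$ whenever nonempty. A two-state continuous-time Markov chain $S\in\{\mathrm{on},\mathrm{off}\}$ leaves on at rate $\alpha$ and off at rate $\beta$; fluid arrives at rate $\hat\lambda+\lambda_d$ when on and $\lambda_d$ when off. The content $x\in[0,K]$ increases at rate (arrival rate $-C$) when positive and $x<K$, decreases at rate $C-$(arrival rate) when positive and $x>0$; at $x=K$ excess fluid is lost. In stationarity let $p_1(X)$, $p_0(X)$ be the densities of $x$ on $(0,K)$ jointly with $S=\mathrm{on}$, $S=\mathrm{off}$, $\Pr\{x=0\}$ the atom at empty (off state) and $\Pr\{x=K\}$ the atom at full (on state); let $\Delta=(\hat\lambda+\lambda_d-C)\Pr\{x=K\}$ and $R=\bar\lambda+\lambda_d-\Delta$ (rate of admitted fluid). The waiting time $\mathbf D_q$ of admitted fluid (FIFO, waits $X/C$ when entering at content $X$) is the random variable with an atom $\lambda_d\Pr\{x=0\}/R$ at $0$, density $\big[(\hat\lambda+\lambda_d)p_1(tC)+\lambda_d p_0(tC)\big]C/R$ for $t\in(0,K/C)$, and an atom $C\Pr\{x=K\}/R$ at $K/C$. $\dot{\mathbf D}_q$ denotes $\mathbf D_q$ under $\lambda_d=C-\bar\lambda$ and $K=\dot{\mathbf K}$. *)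

theory Defs
  imports "HOL-Probability.Probability"
begin

text \<open>Stationary distribution of the on/off fluid queue with buffer K, characterised by
the balance (Kolmogorov forward) equations of the fluid queue:
densities p1 (on) and p0 (off) on (0,K), atom P0 at empty (off state), atom PK at full (on state).\<close>

definition fluid_stationary ::
  "real \<Rightarrow> real \<Rightarrow> real \<Rightarrow> real \<Rightarrow> real \<Rightarrow> real \<Rightarrow>
   (real \<Rightarrow> real) \<Rightarrow> (real \<Rightarrow> real) \<Rightarrow> real \<Rightarrow> real \<Rightarrow> bool" where
  "fluid_stationary \<alpha> \<beta> lhat ld C K p1 p0 P0 PK \<longleftrightarrow>
     (let r1 = lhat + ld - C; r0 = ld - C in
       0 \<le> P0 \<and> 0 \<le> PK \<and>
       (\<forall>x\<in>{0<..<K}. 0 \<le> p1 x \<and> 0 \<le> p0 x) \<and>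
       (\<forall>x\<in>{0<..<K}. (p1 has_real_derivative ((\<beta> * p0 x - \<alpha> * p1 x) / r1)) (at x)) \<and>
       (\<forall>x\<in>{0<..<K}. (p0 has_real_derivative ((\<alpha> * p1 x - \<beta> * p0 x) / r0)) (at x)) \<and>
       (0 < K \<longrightarrow>
          (p1 \<longlongrightarrow> \<beta> * P0 / r1) (at_right 0) \<and>
          (p0 \<longlongrightarrow> \<beta> * P0 / (- r0)) (at_right 0) \<and>
          (p1 \<longlongrightarrow> \<alpha> * PK / r1) (at_left K) \<and>
          (p0 \<longlongrightarrow> \<alpha> * PK / (- r0)) (at_left K)) \<and>
       set_integrable lborel {0<..<K} p1 \<and> set_integrable lborel {0<..<K} p0 \<and>
       (LINT x:{0<..<K}|lborel. p1 x) + PK = \<beta> / (\<alpha> + \<beta>) \<and>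
       (LINT x:{0<..<K}|lborel. p0 x) + P0 = \<alpha> / (\<alpha> + \<beta>))"

definition Dq_law ::
  "real \<Rightarrow> real \<Rightarrow> real \<Rightarrow> real \<Rightarrow> real \<Rightarrow> real \<Rightarrow>
   (real \<Rightarrow> real) \<Rightarrow> (real \<Rightarrow> real) \<Rightarrow> real \<Rightarrow> real \<Rightarrow> real set \<Rightarrow> real" where
  "Dq_law \<alpha> \<beta> lhat ld C K p1 p0 P0 PK A =
     (let lbar = lhat * \<beta> / (\<alpha> + \<beta>);
          \<Delta> = (lhat + ld - C) * PK;
          R = lbar + ld - \<Delta> in
       ld * P0 / R * indicator A 0
       + (LINT t:({0<..<K / C} \<inter> A)|lborel. ((lhat + ld) * p1 (t * C) + ld * p0 (t * C)) * C / R)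
       + C * PK / R * indicator A (K / C))"

end

theory Submission
  imports Defs
begin


lemma const_on_interval:
  fixes f :: "real \<Rightarrow> real"
  assumes K: "0 < K" and d: "\<And>x. x\<in>{0<..<K} \<Longrightarrow> (f has_real_derivative 0) (at x)"
  shows "\<exists>c. (\<forall>x\<in>{0<..<K}. f x = c) \<and> (\<forall>l. (f \<longlongrightarrow> l) (at_right 0) \<longrightarrow> l = c)
           \<and> (\<forall>l. (f \<longlongrightarrow> l) (at_left K) \<longrightarrow> l = c)"
proof -
  obtain c where c: "\<forall>x\<in>{0<..<K}. f x = c"
    using has_field_derivative_zero_constant[of "{0<..<K}" f] d
    by (meson convex_real_interval(8) has_field_derivative_at_within)
  have e1: "eventually (\<lambda>x. f x = c) (at_right 0)"
    using eventually_at_right_real[OF K] by (rule eventually_mono) (use c in auto)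
  have e2: "eventually (\<lambda>x. f x = c) (at_left K)"
    using eventually_at_left_real[OF K] by (rule eventually_mono) (use c in auto)
  have t1: "(f \<longlongrightarrow> c) (at_right 0)"
    using tendsto_eventually[OF e1] by (simp add: tendsto_cong[OF e1])
  have t2: "(f \<longlongrightarrow> c) (at_left K)"
    by (simp add: tendsto_cong[OF e2])
  show ?thesis
    using c t1 t2 tendsto_unique trivial_limit_at_right_real trivial_limit_at_left_real
    by blast
qed



lemma stationary_facts:
  assumes a: "0 < \<alpha>" and bb: "0 < \<beta>" and l: "0 < lhat" and lC: "lbar < C"
    and lbar: "lbar = lhat * \<beta> / (\<alpha> + \<beta>)" and ld: "ld = C - lbar" and K: "0 \<le> K"
    and st: "fluid_stationary \<alpha> \<beta> lhat ld C K p1 p0 P0 PK"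
  defines "r1 \<equiv> lhat * \<alpha> / (\<alpha> + \<beta>)"
  shows "(\<forall>x\<in>{0<..<K}. p1 x = \<beta> * P0 / r1 \<and> p0 x = \<beta> * P0 / lbar)
         \<and> \<alpha> * PK = \<beta> * P0 \<and> K * (\<beta> * P0 / r1) + PK = \<beta> / (\<alpha> + \<beta>)"
proof -
  have r1e: "lhat + ld - C = r1" unfolding r1_def ld lbar using a bb by (simp add: field_simps)
  have r0e: "ld - C = - lbar" using ld by simp
  have r1p: "r1 > 0" unfolding r1_def using a bb l by simp
  have lbp: "lbar > 0" unfolding lbar using a bb l by simp
  have key: "\<beta> / lbar = \<alpha> / r1" unfolding r1_def lbar using a bb l by (simp add: field_simps)
  note S = st[unfolded fluid_stationary_def Let_def r1e r0e minus_minus]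
  show ?thesis
  proof (cases "K = 0")
    case True
    then have "PK = \<beta> / (\<alpha> + \<beta>)" "P0 = \<alpha> / (\<alpha> + \<beta>)"
      using S by (auto simp: set_lebesgue_integral_def)
    then show ?thesis using True by (auto simp: ac_simps)
  next
    case False
    then have Kp: "0 < K" using K by simp
    then have S1: "\<forall>x\<in>{0<..<K}. (p1 has_real_derivative ((\<beta> * p0 x - \<alpha> * p1 x) / r1)) (at x)"
      and S0: "\<forall>x\<in>{0<..<K}. (p0 has_real_derivative ((\<alpha> * p1 x - \<beta> * p0 x) / - lbar)) (at x)"
      and L1: "(p1 \<longlongrightarrow> \<beta> * P0 / r1) (at_right 0)"
      and L0: "(p0 \<longlongrightarrow> \<beta> * P0 / lbar) (at_right 0)"
      and R1: "(p1 \<longlongrightarrow> \<alpha> * PK / r1) (at_left K)"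
      and I1: "(LINT x:{0<..<K}|lborel. p1 x) + PK = \<beta> / (\<alpha> + \<beta>)"
      using S by auto
    define u where "u x = \<beta> * p0 x - \<alpha> * p1 x" for x
    have du: "(u has_real_derivative 0) (at x)" if x: "x\<in>{0<..<K}" for x
    proof -
      have "(u has_real_derivative (\<beta> * ((\<alpha> * p1 x - \<beta> * p0 x) / - lbar) - \<alpha> * ((\<beta> * p0 x - \<alpha> * p1 x) / r1))) (at x)"
        unfolding u_def using S1 S0 x by (auto intro!: derivative_eq_intros simp: algebra_simps)
      moreover have "\<beta> * ((\<alpha> * p1 x - \<beta> * p0 x) / - lbar) - \<alpha> * ((\<beta> * p0 x - \<alpha> * p1 x) / r1) = 0"
      proof -
        have "\<beta> * ((\<alpha> * p1 x - \<beta> * p0 x) / - lbar) = (\<beta> / lbar) * (\<beta> * p0 x - \<alpha> * p1 x)"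
          by (simp add: divide_simps) (simp add: algebra_simps)
        also have "\<dots> = (\<alpha> / r1) * (\<beta> * p0 x - \<alpha> * p1 x)" using key by simp
        finally show ?thesis by (simp add: field_simps)
      qed
      ultimately show ?thesis by simp
    qed
    obtain cu where cu: "\<forall>x\<in>{0<..<K}. u x = cu" "\<forall>l. (u \<longlongrightarrow> l) (at_right 0) \<longrightarrow> l = cu"
      using const_on_interval[OF Kp du] by blast
    have "(u \<longlongrightarrow> \<beta> * (\<beta> * P0 / lbar) - \<alpha> * (\<beta> * P0 / r1)) (at_right 0)"
      unfolding u_def by (intro tendsto_intros L0 L1)
    moreover have "\<beta> * (\<beta> * P0 / lbar) - \<alpha> * (\<beta> * P0 / r1) = 0"
    proof -
      have "\<beta> * (\<beta> * P0 / lbar) = (\<beta> / lbar) * (\<beta> * P0)" by simp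
      also have "\<dots> = (\<alpha> / r1) * (\<beta> * P0)" using key by simp
      finally show ?thesis by simp
    qed
    ultimately have u0: "\<forall>x\<in>{0<..<K}. u x = 0" using cu by auto
    have dp1: "(p1 has_real_derivative 0) (at x)" if "x\<in>{0<..<K}" for x
      using S1 u0 that unfolding u_def by (metis diff_0 div_0 minus_diff_eq neg_0_equal_iff_equal)
    have dp0: "(p0 has_real_derivative 0) (at x)" if "x\<in>{0<..<K}" for x
      using S0 u0 that unfolding u_def
      by (metis (no_types, lifting) add.inverse_neutral diff_0 diff_self div_0 minus_diff_eq)
    obtain c1 where c1: "\<forall>x\<in>{0<..<K}. p1 x = c1" "\<forall>l. (p1 \<longlongrightarrow> l) (at_right 0) \<longrightarrow> l = c1"
      "\<forall>l. (p1 \<longlongrightarrow> l) (at_left K) \<longrightarrow> l = c1"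
      using const_on_interval[OF Kp dp1] by blast
    obtain c0 where c0: "\<forall>x\<in>{0<..<K}. p0 x = c0" "\<forall>l. (p0 \<longlongrightarrow> l) (at_right 0) \<longrightarrow> l = c0"
      using const_on_interval[OF Kp dp0] by blast
    have e1: "c1 = \<beta> * P0 / r1" using c1 L1 by auto
    have e0: "c0 = \<beta> * P0 / lbar" using c0 L0 by auto
    have "\<alpha> * PK / r1 = \<beta> * P0 / r1" using c1 R1 e1 by auto
    then have eK: "\<alpha> * PK = \<beta> * P0" using r1p by (simp add: field_simps)
    have "(LINT x:{0<..<K}|lborel. p1 x) = (LINT x:{0<..<K}|lborel. c1)"
      by (rule set_lebesgue_integral_cong) (use c1 in auto)
    also have "\<dots> = K * c1" using Kp by (simp add: set_integral_const)
    finally have "K * c1 + PK = \<beta> / (\<alpha> + \<beta>)" using I1 by simp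
    then show ?thesis using c1 c0 e1 e0 eK by auto
  qed
qed



lemma moment_generic:
  fixes M :: "'w measure" and X :: "'w \<Rightarrow> real" and f :: "real \<Rightarrow> real"
  assumes P: "prob_space M" and Xm[measurable]: "X \<in> borel_measurable M"
    and T: "0 \<le> T" and D: "0 \<le> D"
    and law: "\<And>A. A \<in> sets borel \<Longrightarrow> measure M (X -` A \<inter> space M)
        = a0 * indicator A 0 + D * measure lborel ({0<..<T} \<inter> A) + aK * indicator A T"
    and fc: "continuous_on UNIV f" and f0: "f 0 = 0"
  shows "integrable M (\<lambda>w. f (X w))"
    and "(\<integral>w. f (X w) \<partial>M) = f T * aK + D * (LINT x:{0<..<T}|lborel. f x)"
proof -
  interpret prob_space M by (rule P)
  have fm[measurable]: "f \<in> borel_measurable borel"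
    using fc by (simp add: borel_measurable_continuous_onI)
  have null: "measure M (X -` (- {0..T}) \<inter> space M) = 0"
  proof -
    have "{0<..<T} \<inter> - {0..T} = {}" by auto
    then show ?thesis using law[of "- {0..T}"] T by (simp add: indicator_def)
  qed
  have AE0: "AE w in M. X w \<in> {0..T}"
  proof (subst AE_iff_measurable[of "X -` (- {0..T}) \<inter> space M"])
    show "X -` (- {0..T}) \<inter> space M \<in> sets M" by measurable
    show "{x \<in> space M. X x \<notin> {0..T}} = X -` (- {0..T}) \<inter> space M" by auto
    show "emeasure M (X -` (- {0..T}) \<inter> space M) = 0"
      using null by (simp add: emeasure_eq_measure)
  qed
  define \<Omega> where "\<Omega> = X -` {0<..<T} \<inter> space M"
  have \<Omega>s[measurable]: "\<Omega> \<in> sets M" unfolding \<Omega>_def by measurable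
  have \<Omega>s': "\<Omega> \<inter> space M \<in> sets M" using \<Omega>s by simp
  define Mr where "Mr = restrict_space M \<Omega>"
  define g where "g x = D * indicator {0<..<T} x" for x :: real
  have gm[measurable]: "g \<in> borel_measurable lborel" unfolding g_def by measurable
  define N where "N = density lborel g"
  have XMr: "X \<in> measurable Mr borel"
    unfolding Mr_def by (rule measurable_restrict_space1) (rule Xm)
  have distrN: "distr Mr borel X = N"
  proof (rule measure_eqI)
    show "sets (distr Mr borel X) = sets N" unfolding N_def by simp
    fix A assume A: "A \<in> sets (distr Mr borel X)"
    then have Ab[measurable]: "A \<in> sets borel" by simp
    have sp: "space Mr = \<Omega>" unfolding Mr_def \<Omega>_def by auto
    have "emeasure (distr Mr borel X) A = emeasure Mr (X -` A \<inter> space Mr)"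
      using A XMr by (simp add: emeasure_distr)
    also have "\<dots> = emeasure M (X -` A \<inter> \<Omega>)"
      unfolding sp unfolding Mr_def by (rule emeasure_restrict_space[OF \<Omega>s']) auto
    also have "X -` A \<inter> \<Omega> = X -` (A \<inter> {0<..<T}) \<inter> space M" unfolding \<Omega>_def by auto
    also have "emeasure M \<dots> = ennreal (measure M (X -` (A \<inter> {0<..<T}) \<inter> space M))"
      by (simp add: emeasure_eq_measure)
    also have "measure M (X -` (A \<inter> {0<..<T}) \<inter> space M) = D * measure lborel ({0<..<T} \<inter> A)"
    proof -
      have "{0<..<T} \<inter> (A \<inter> {0<..<T}) = {0<..<T} \<inter> A" by auto
      then show ?thesis using law[of "A \<inter> {0<..<T}"] by (simp add: indicator_def)
    qed
    also have "ennreal (D * measure lborel ({0<..<T} \<inter> A)) = ennreal D * emeasure lborel ({0<..<T} \<inter> A)"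
    proof -
      have "emeasure lborel ({0<..<T} \<inter> A) \<le> emeasure lborel {0<..<T}"
        by (intro emeasure_mono) auto
      then have "emeasure lborel ({0<..<T} \<inter> A) \<noteq> \<infinity>" using T by (auto simp: top_unique)
      then show ?thesis using D
        by (simp add: ennreal_mult emeasure_eq_ennreal_measure)
    qed
    also have "\<dots> = emeasure N A"
      unfolding N_def g_def using Ab D
      by (subst emeasure_density) (auto simp: ennreal_mult' nn_integral_cmult_indicator
            intro!: nn_integral_cong split: split_indicator
            simp flip: nn_integral_cmult_indicator)
    finally show "emeasure (distr Mr borel X) A = emeasure N A" .
  qed
  have fi: "integrable lborel (\<lambda>x. indicator {0..T} x *\<^sub>R f x)"
    by (rule borel_integrable_compact) (auto intro: continuous_on_subset[OF fc])
  have fi2: "integrable lborel (\<lambda>x. g x *\<^sub>R f x)"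
  proof -
    have "set_integrable lborel {0<..<T} f"
      by (rule set_integrable_subset[of _ "{0..T}"]) (use fi in \<open>auto simp: set_integrable_def\<close>)
    then show ?thesis unfolding g_def set_integrable_def
      using integrable_mult_right[where M=lborel and f="\<lambda>x. indicator {0<..<T} x * f x" and c=D] by (simp add: mult.assoc)
  qed
  have gnn: "AE x in lborel. 0 \<le> g x" using D by (auto simp: g_def)
  have intN: "integrable N f" unfolding N_def
    by (subst integrable_density) (use fi2 gnn in auto)
  have intMr: "integrable Mr (\<lambda>w. f (X w))"
    using intN integrable_distr_eq[OF XMr fm] distrN by simp
  have intM2: "integrable M (\<lambda>w. indicator \<Omega> w *\<^sub>R f (X w))"
    using intMr integrable_restrict_space[OF \<Omega>s', of "\<lambda>w. f (X w)"] unfolding Mr_def by blast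
  have I2: "(\<integral>w. indicator \<Omega> w *\<^sub>R f (X w) \<partial>M) = D * (LINT x:{0<..<T}|lborel. f x)"
  proof -
    have "(\<integral>w. indicator \<Omega> w *\<^sub>R f (X w) \<partial>M) = (\<integral>w. f (X w) \<partial>Mr)"
      unfolding Mr_def by (rule integral_restrict_space[OF \<Omega>s', symmetric])
    also have "\<dots> = integral\<^sup>L (distr Mr borel X) f"
      by (rule integral_distr[OF XMr fm, symmetric])
    also have "\<dots> = (\<integral>x. g x *\<^sub>R f x \<partial>lborel)"
      unfolding distrN N_def by (rule integral_density) (use gnn in auto)
    also have "\<dots> = D * (LINT x:{0<..<T}|lborel. f x)"
      unfolding g_def set_lebesgue_integral_def by (simp add: mult.assoc)
    finally show ?thesis .
  qed
  define ET where "ET = X -` {T} \<inter> space M"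
  have ETs[measurable]: "ET \<in> sets M" unfolding ET_def by measurable
  have mET: "f T * measure M ET = f T * aK"
  proof (cases "T = 0")
    case True then show ?thesis using f0 by simp
  next
    case False
    then show ?thesis using law[of "{T}"] unfolding ET_def by (simp add: indicator_def)
  qed
  have AEeq: "AE w in M. f (X w) = f T * indicator ET w + indicator \<Omega> w *\<^sub>R f (X w)"
    using AE0
  proof (rule AE_mp, intro AE_I2 impI)
    fix w assume w: "w \<in> space M" "X w \<in> {0..T}"
    show "f (X w) = f T * indicator ET w + indicator \<Omega> w *\<^sub>R f (X w)"
      using w f0 unfolding ET_def \<Omega>_def by (cases "X w = 0"; cases "X w = T") (auto simp: indicator_def)
  qed
  have int1: "integrable M (\<lambda>w. f T * indicator ET w)"
    by (intro integrable_mult_right integrable_real_indicator) (auto simp: ETs less_top[symmetric])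
  show intf: "integrable M (\<lambda>w. f (X w))"
    by (rule integrable_cong_AE_imp[OF _ _ AE_symmetric[OF AEeq]])
       (use int1 intM2 in auto)
  have "(\<integral>w. f (X w) \<partial>M) = (\<integral>w. f T * indicator ET w + indicator \<Omega> w *\<^sub>R f (X w) \<partial>M)"
    by (rule integral_cong_AE) (use AEeq in auto)
  also have "\<dots> = f T * measure M ET + D * (LINT x:{0<..<T}|lborel. f x)"
    using int1 intM2 I2 by (simp add: Bochner_Integration.integral_add)
  finally show "(\<integral>w. f (X w) \<partial>M) = f T * aK + D * (LINT x:{0<..<T}|lborel. f x)"
    using mET by simp
qed



lemma lint_x:
  fixes T :: real assumes "0 \<le> T"
  shows "(LINT x:{0<..<T}|lborel. x) = T\<^sup>2 / 2"
proof -
  have "(LINT x:{0<..<T}|lborel. x) = (LBINT x=ereal 0..ereal T. x)"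
    using assms by (simp add: interval_lebesgue_integral_le_eq)
  also have "\<dots> = T\<^sup>2 / 2 - 0\<^sup>2 / 2"
    by (rule interval_integral_FTC_finite)
       (auto intro!: derivative_eq_intros continuous_intros simp: has_real_derivative_iff_has_vector_derivative[symmetric])
  finally show ?thesis by simp
qed

lemma lint_x2:
  fixes T :: real assumes "0 \<le> T"
  shows "(LINT x:{0<..<T}|lborel. x\<^sup>2) = T ^ 3 / 3"
proof -
  have "(LINT x:{0<..<T}|lborel. x\<^sup>2) = (LBINT x=ereal 0..ereal T. x\<^sup>2)"
    using assms by (simp add: interval_lebesgue_integral_le_eq)
  also have "\<dots> = T ^ 3 / 3 - 0 ^ 3 / 3"
    by (rule interval_integral_FTC_finite)
       (auto intro!: derivative_eq_intros continuous_intros simp: has_real_derivative_iff_has_vector_derivative[symmetric])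
  finally show ?thesis by simp
qed



lemma geometric_sums_times_n2:
  fixes c :: real
  assumes "norm c < 1"
  shows "(\<lambda>n. c^n * (of_nat n)\<^sup>2) sums (c * (1 + c) / (1 - c) ^ 3)"
proof -
  have s1: "(\<lambda>n. of_nat n * z ^ n) sums (z / (1 - z)\<^sup>2)" if "norm z < 1" for z :: real
    using geometric_sums_times_n[OF that] by (simp add: mult.commute)
  have der: "((\<lambda>z. z / (1 - z)\<^sup>2) has_field_derivative ((1 + c) / (1 - c) ^ 3)) (at c)"
  proof -
    have c1: "1 - c \<noteq> 0" using assms by auto
    have "((\<lambda>z. z / (1 - z)\<^sup>2) has_field_derivative ((1 * (1 - c)\<^sup>2 - c * (2 * (1 - c) * (0 - 1))) / ((1 - c)\<^sup>2)\<^sup>2)) (at c)"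
      by (intro derivative_eq_intros) (use c1 in auto)
    moreover have "(1 * (1 - c)\<^sup>2 - c * (2 * (1 - c) * (0 - 1))) / ((1 - c)\<^sup>2)\<^sup>2 = (1 + c) / (1 - c) ^ 3"
    proof -
      have e1: "1 * (1 - c)\<^sup>2 - c * (2 * (1 - c) * (0 - 1)) = (1 + c) * (1 - c)"
        by (simp add: power2_eq_square algebra_simps)
      have e2: "((1 - c)\<^sup>2)\<^sup>2 = (1 - c) ^ 3 * (1 - c)"
        by (simp add: power2_eq_square power3_eq_cube)
      show ?thesis unfolding e1 e2 using c1 by simp
    qed
    ultimately show ?thesis by simp
  qed
  have "(\<lambda>n. diffs (\<lambda>n. of_nat n) n * c ^ n) sums ((1 + c) / (1 - c) ^ 3)"
    by (rule termdiffs_sums_strong[OF s1 der assms]) simp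
  then have "(\<lambda>n. (of_nat (Suc n))\<^sup>2 * c ^ n) sums ((1 + c) / (1 - c) ^ 3)"
    unfolding diffs_def by (simp add: power2_eq_square)
  then have "(\<lambda>n. c * ((of_nat (Suc n))\<^sup>2 * c ^ n)) sums (c * ((1 + c) / (1 - c) ^ 3))"
    by (rule sums_mult)
  then have "(\<lambda>n. c ^ Suc n * (of_nat (Suc n))\<^sup>2) sums (c * (1 + c) / (1 - c) ^ 3)"
    by (simp add: mult_ac)
  then show ?thesis by (subst (asm) sums_Suc_iff) simp
qed

lemma geom_moments:
  fixes p :: real assumes p: "0 < p" "p < 1"
  shows "integrable (measure_pmf (geometric_pmf p)) (\<lambda>n. real n)"
    and "(\<integral>n. real n \<partial>measure_pmf (geometric_pmf p)) = (1 - p) / p"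
    and "integrable (measure_pmf (geometric_pmf p)) (\<lambda>n. (real n)\<^sup>2)"
    and "(\<integral>n. (real n)\<^sup>2 \<partial>measure_pmf (geometric_pmf p)) = (1 - p) * (2 - p) / p\<^sup>2"
proof -
  show "integrable (measure_pmf (geometric_pmf p)) (\<lambda>n. real n)"
    using integrable_real_geometric_pmf[of p] p by simp
  show "(\<integral>n. real n \<partial>measure_pmf (geometric_pmf p)) = (1 - p) / p"
    using expectation_geometric_pmf[of p] p by simp
  have "(\<lambda>n. p * ((1 - p) ^ n * (real n)\<^sup>2)) sums (p * ((1 - p) * (1 + (1 - p)) / (1 - (1 - p)) ^ 3))"
    using p by (intro sums_mult geometric_sums_times_n2) auto
  moreover have "p * ((1 - p) * (1 + (1 - p)) / (1 - (1 - p)) ^ 3) = (1 - p) * (2 - p) / p\<^sup>2"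
    using p by (simp add: field_simps power2_eq_square power3_eq_cube)
  ultimately have *: "(\<lambda>n. pmf (geometric_pmf p) n * (real n)\<^sup>2) sums ((1 - p) * (2 - p) / p\<^sup>2)"
    using p by (simp add: mult_ac)
  have ic: "integrable (count_space UNIV) (\<lambda>n. pmf (geometric_pmf p) n * (real n)\<^sup>2)"
    using * unfolding integrable_count_space_nat_iff by (simp add: sums_iff)
  show "integrable (measure_pmf (geometric_pmf p)) (\<lambda>n. (real n)\<^sup>2)"
    unfolding measure_pmf_eq_density by (subst integrable_density) (use ic in auto)
  have "(\<integral>n. (real n)\<^sup>2 \<partial>measure_pmf (geometric_pmf p)) =
        (\<integral>n. pmf (geometric_pmf p) n * (real n)\<^sup>2 \<partial>count_space UNIV)"
    unfolding measure_pmf_eq_density by (subst integral_density) auto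
  also have "\<dots> = (1 - p) * (2 - p) / p\<^sup>2"
    using * ic by (subst integral_count_space_nat) (simp_all add: sums_iff)
  finally show "(\<integral>n. (real n)\<^sup>2 \<partial>measure_pmf (geometric_pmf p)) = (1 - p) * (2 - p) / p\<^sup>2" .
qed



lemma alg1:
  fixes \<alpha> \<beta> \<rho> C :: real
  assumes nz: "\<alpha> \<noteq> 0" "\<beta> \<noteq> 0" "\<rho> \<noteq> 0" "C \<noteq> 0" "1 - \<rho> \<noteq> 0" "\<alpha> + \<beta> \<noteq> 0"
  defines "T \<equiv> \<rho> / (\<alpha> + \<beta>) * (\<alpha> / \<beta> * (\<rho> / (1 - \<rho>) - 1) - 1)"
    and "aK \<equiv> \<beta> * (1 - \<rho>) / (\<alpha> * \<rho>^2)"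
    and "D \<equiv> (\<alpha> + \<beta>) * \<beta> * (1 - \<rho>) / (\<alpha> * \<rho>^3)"
  shows "T * aK + D * (T\<^sup>2 / 2) = 1 / (\<alpha> + \<beta>) * (((2 * (\<alpha> / \<beta>) + 1) * \<rho> - (1 + \<alpha> / \<beta>))
                              * ((2 - \<beta> / \<alpha>) * \<rho> + (\<beta> / \<alpha> - 1)))
                           / (2 * \<rho> * (1 - \<rho>))"
    and "T\<^sup>2 * aK + D * (T ^ 3 / 3) = (1 / (\<alpha> + \<beta>))\<^sup>2 * (((2 * \<rho> - 1) * (\<alpha> / \<beta>) - (1 - \<rho>))\<^sup>2
                              * ((1 - \<rho>) * (2 * \<beta> / \<alpha>) + 2 * \<rho> - 1))
                           / (3 * (1 - \<rho>)\<^sup>2)"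
  unfolding T_def aK_def D_def using nz by (simp_all add: divide_simps) algebra+


theorem theorem2:
  fixes \<alpha> \<beta> lhat C a :: real
    and p1 p0 :: "real \<Rightarrow> real" and P0 PK ld K Pd :: real
    and M :: "'w measure" and G :: "'w \<Rightarrow> nat" and Dq :: "'w \<Rightarrow> real"
  defines "b \<equiv> 1 / (\<alpha> + \<beta>)"
    and "lbar \<equiv> lhat * \<beta> / (\<alpha> + \<beta>)"
    and "\<rho> \<equiv> lhat * \<beta> / (\<alpha> + \<beta>) / C"
  assumes "0 < \<alpha>" and "0 < \<beta>" and "0 < lhat" and "lbar < C"
    and "ld = C - lbar"
    and "K = b * lbar * (\<alpha> / \<beta> * (\<rho> / (1 - \<rho>) - 1) - 1)"
    and "0 \<le> K"
    and "Pd = 1 - \<rho>"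
    and "fluid_stationary \<alpha> \<beta> lhat ld C K p1 p0 P0 PK"
    and "0 < a"
    and "prob_space M"
    and "G \<in> measurable M (count_space UNIV)"
    and "Dq \<in> borel_measurable M"
    and "prob_space.indep_var M borel (\<lambda>w. real (G w)) borel Dq"
    and "\<And>g. measure M {w \<in> space M. G w = g} = Pd ^ g * (1 - Pd)"
    and "\<And>A. A \<in> sets borel \<Longrightarrow>
           measure M (Dq -` A \<inter> space M) = Dq_law \<alpha> \<beta> lhat ld C K p1 p0 P0 PK A"
  shows
    "(\<integral>w. a * real (G w) + Dq w \<partial>M) = a * (1 - \<rho>) / \<rho> + (\<integral>w. Dq w \<partial>M)
     \<and> (\<integral>w. (a * real (G w) + Dq w - (\<integral>v. a * real (G v) + Dq v \<partial>M))\<^sup>2 \<partial>M)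
         = a\<^sup>2 * (1 - \<rho>) / \<rho>\<^sup>2 + (\<integral>w. (Dq w - (\<integral>v. Dq v \<partial>M))\<^sup>2 \<partial>M)
     \<and> (\<integral>w. Dq w \<partial>M) = b * (((2 * (\<alpha> / \<beta>) + 1) * \<rho> - (1 + \<alpha> / \<beta>))
                              * ((2 - \<beta> / \<alpha>) * \<rho> + (\<beta> / \<alpha> - 1)))
                           / (2 * \<rho> * (1 - \<rho>))
     \<and> (\<integral>w. (Dq w)\<^sup>2 \<partial>M) = b\<^sup>2 * (((2 * \<rho> - 1) * (\<alpha> / \<beta>) - (1 - \<rho>))\<^sup>2
                              * ((1 - \<rho>) * (2 * \<beta> / \<alpha>) + 2 * \<rho> - 1))
                           / (3 * (1 - \<rho>)\<^sup>2)"
  proof -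
  note as = assms(4-)
  have ap: "0 < \<alpha>" and bp: "0 < \<beta>" and lp: "0 < lhat" and lC: "lbar < C" by fact+
  have lbp: "0 < lbar" unfolding lbar_def using ap bp lp by simp
  have Cp: "0 < C" using lbp lC by simp
  have rho_eq: "\<rho> = lbar / C" unfolding \<rho>_def lbar_def by simp
  have rp: "0 < \<rho>" "\<rho> < 1" using rho_eq lbp lC Cp by auto
  have nz: "\<alpha> \<noteq> 0" "\<beta> \<noteq> 0" "\<rho> \<noteq> 0" "C \<noteq> 0" "1 - \<rho> \<noteq> 0" "\<alpha> + \<beta> \<noteq> 0"
    using ap bp rp Cp by auto
  have lbar_eq: "lbar = \<rho> * C" using rho_eq Cp by simp
  have lhat_eq: "lhat = \<rho> * C * (\<alpha> + \<beta>) / \<beta>"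
    using lbar_eq unfolding lbar_def using ap bp by (simp add: field_simps)
  define r1 where "r1 = lhat * \<alpha> / (\<alpha> + \<beta>)"
  have sp: "0 < \<alpha> + \<beta>" using ap bp by simp
  have "r1 = lbar * \<alpha> / \<beta>" unfolding r1_def lbar_def using ap bp sp
    by (simp add: divide_simps)
  then have r1_eq: "r1 = \<rho> * C * \<alpha> / \<beta>" using lbar_eq by simp
  have SF: "(\<forall>x\<in>{0<..<K}. p1 x = \<beta> * P0 / r1 \<and> p0 x = \<beta> * P0 / lbar)
         \<and> \<alpha> * PK = \<beta> * P0 \<and> K * (\<beta> * P0 / r1) + PK = \<beta> / (\<alpha> + \<beta>)"
    unfolding r1_def by (rule stationary_facts[OF ap bp lp lC lbar_def[THEN meta_eq_to_obj_eq] assms(8) assms(10) assms(12)])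
  have K_eq: "K = \<rho> * C / (\<alpha> + \<beta>) * (\<alpha> / \<beta> * (\<rho> / (1 - \<rho>) - 1) - 1)"
    using assms(9) unfolding b_def lbar_eq by simp
  have P0_eq: "P0 = (1 - \<rho>) / \<rho>"
  proof -
    have PK: "PK = \<beta> * P0 / \<alpha>" using SF ap by (simp add: field_simps)
    have "K * (\<beta> * P0 / r1) + \<beta> * P0 / \<alpha> = \<beta> / (\<alpha> + \<beta>)" using SF PK by simp
    then have "P0 * (\<beta> * (K / r1 + 1 / \<alpha>)) = \<beta> / (\<alpha> + \<beta>)" by (simp add: algebra_simps)
    moreover have "K / r1 + 1 / \<alpha> = \<rho> / ((\<alpha> + \<beta>) * (1 - \<rho>))"
      unfolding K_eq r1_eq using nz by (simp add: divide_simps) algebra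
    ultimately have "P0 * (\<beta> * \<rho> / ((\<alpha> + \<beta>) * (1 - \<rho>))) = \<beta> / (\<alpha> + \<beta>)" by simp
    then have "P0 * (\<beta> * \<rho>) = \<beta> * (1 - \<rho>)" using nz by (simp add: divide_simps mult_ac)
    then have "P0 * \<rho> = 1 - \<rho>" using nz by (metis mult.left_commute mult_left_cancel)
    then show ?thesis using nz by (simp add: divide_simps)
  qed
  have PK_eq: "PK = \<beta> * (1 - \<rho>) / (\<alpha> * \<rho>)"
  proof -
    have "\<alpha> * PK = \<beta> * ((1 - \<rho>) / \<rho>)" using SF P0_eq by simp
    then have h: "\<alpha> * PK * \<rho> = \<beta> * (1 - \<rho>)" using nz by (simp add: divide_simps)
    show ?thesis using nz h by (simp add: divide_simps mult_ac)
  qed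
  have r1p: "0 < r1" unfolding r1_eq using ap bp rp Cp by simp
  have P0p: "0 \<le> P0" unfolding P0_eq using rp by simp
  define T where "T = K / C"
  define R where "R = lbar + ld - (lhat + ld - C) * PK"
  have r1e: "lhat + ld - C = r1" unfolding r1_def assms(8) lbar_def using sp by (simp add: divide_simps) algebra
  have R_eq: "R = lbar"
  proof -
    have "r1 * PK = C * (1 - \<rho>)" unfolding r1_eq PK_eq using nz by (simp add: divide_simps)
    moreover have "R = C - r1 * PK" unfolding R_def r1e using assms(8) by simp
    ultimately show ?thesis using lbar_eq by (simp add: algebra_simps)
  qed
  define D where "D = ((lhat + ld) * (\<beta> * P0 / r1) + ld * (\<beta> * P0 / lbar)) * C / R"
  define a0 where "a0 = ld * P0 / R"
  define aK where "aK = C * PK / R"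
  have ldp: "0 < ld" using assms(8) lC by simp
  have Dp: "0 \<le> D" unfolding D_def R_eq using lp ldp P0p r1p lbp bp Cp by (intro divide_nonneg_pos mult_nonneg_nonneg add_nonneg_nonneg) auto
  have Tp: "0 \<le> T" unfolding T_def using assms(10) Cp by simp
  have law: "measure M (Dq -` A \<inter> space M)
        = a0 * indicator A 0 + D * measure lborel ({0<..<T} \<inter> A) + aK * indicator A T"
    if A: "A \<in> sets borel" for A
  proof -
    have "(LINT t:({0<..<T} \<inter> A)|lborel. ((lhat + ld) * p1 (t * C) + ld * p0 (t * C)) * C / R)
        = (LINT t:({0<..<T} \<inter> A)|lborel. D)"
    proof (rule set_lebesgue_integral_cong)
      show "{0<..<T} \<inter> A \<in> sets lborel" using A by simp
      show "\<forall>t. t \<in> {0<..<T} \<inter> A \<longrightarrow> ((lhat + ld) * p1 (t * C) + ld * p0 (t * C)) * C / R = D"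
      proof (intro allI impI)
        fix t assume t: "t \<in> {0<..<T} \<inter> A"
        then have "t * C \<in> {0<..<K}" using Cp unfolding T_def by (auto simp: field_simps)
        then show "((lhat + ld) * p1 (t * C) + ld * p0 (t * C)) * C / R = D"
          using SF unfolding D_def by auto
      qed
    qed
    also have "\<dots> = D * measure lborel ({0<..<T} \<inter> A)"
    proof (subst set_integral_const)
      show "{0<..<T} \<inter> A \<in> sets lborel" using A by simp
      have "emeasure lborel ({0<..<T} \<inter> A) \<le> emeasure lborel {0<..<T}"
        by (intro emeasure_mono) auto
      then show "emeasure lborel ({0<..<T} \<inter> A) \<noteq> \<infinity>" using Tp by (auto simp: top_unique)
    qed simp
    finally have I: "(LINT t:({0<..<T} \<inter> A)|lborel. ((lhat + ld) * p1 (t * C) + ld * p0 (t * C)) * C / R)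
        = D * measure lborel ({0<..<T} \<inter> A)" .
    have "Dq_law \<alpha> \<beta> lhat ld C K p1 p0 P0 PK A
        = a0 * indicator A 0 + D * measure lborel ({0<..<T} \<inter> A) + aK * indicator A T"
      unfolding Dq_law_def Let_def lbar_def[symmetric] R_def[symmetric] T_def[symmetric]
      unfolding I a0_def aK_def ..
    then show ?thesis using assms(19)[OF A] by simp
  qed
  interpret P: prob_space M by (rule assms(14))
  have DqM[measurable]: "Dq \<in> borel_measurable M" by (rule assms(16))
  have cid: "continuous_on UNIV (\<lambda>x::real. x)" by (intro continuous_intros)
  have csq: "continuous_on UNIV (\<lambda>x::real. x\<^sup>2)" by (intro continuous_intros)
  note MG1 = moment_generic[OF assms(14) DqM Tp Dp law cid]
  note MG2 = moment_generic[OF assms(14) DqM Tp Dp law csq]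
  have intD: "integrable M Dq" using MG1(1) by simp
  have intD2: "integrable M (\<lambda>w. (Dq w)\<^sup>2)" using MG2(1) by simp
  have ED: "(\<integral>w. Dq w \<partial>M) = T * aK + D * (T\<^sup>2 / 2)" using MG1(2) lint_x[OF Tp] by simp
  have ED2: "(\<integral>w. (Dq w)\<^sup>2 \<partial>M) = T\<^sup>2 * aK + D * (T ^ 3 / 3)" using MG2(2) lint_x2[OF Tp] by simp
  have T_eq: "T = \<rho> / (\<alpha> + \<beta>) * (\<alpha> / \<beta> * (\<rho> / (1 - \<rho>) - 1) - 1)"
    unfolding T_def K_eq using nz by simp
  have aK_eq: "aK = \<beta> * (1 - \<rho>) / (\<alpha> * \<rho>^2)"
    unfolding aK_def R_eq PK_eq lbar_eq using nz by (simp add: divide_simps) algebra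
  have D_eq: "D = (\<alpha> + \<beta>) * \<beta> * (1 - \<rho>) / (\<alpha> * \<rho>^3)"
    unfolding D_def R_eq P0_eq r1_eq assms(8) lbar_eq lhat_eq using nz by (simp add: divide_simps) algebra
  have EDq: "(\<integral>w. Dq w \<partial>M) = b * (((2 * (\<alpha> / \<beta>) + 1) * \<rho> - (1 + \<alpha> / \<beta>))
                              * ((2 - \<beta> / \<alpha>) * \<rho> + (\<beta> / \<alpha> - 1)))
                           / (2 * \<rho> * (1 - \<rho>))"
    unfolding ED T_eq aK_eq D_eq b_def by (rule alg1(1)[OF nz])
  have EDq2: "(\<integral>w. (Dq w)\<^sup>2 \<partial>M) = b\<^sup>2 * (((2 * \<rho> - 1) * (\<alpha> / \<beta>) - (1 - \<rho>))\<^sup>2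
                              * ((1 - \<rho>) * (2 * \<beta> / \<alpha>) + 2 * \<rho> - 1))
                           / (3 * (1 - \<rho>)\<^sup>2)"
    unfolding ED2 T_eq aK_eq D_eq b_def by (rule alg1(2)[OF nz])
  have Gm[measurable]: "G \<in> measurable M (count_space UNIV)" by (rule assms(15))
  have rp': "0 < \<rho>" "\<rho> \<le> 1" using rp by auto
  have distrG: "distr M (count_space UNIV) G = measure_pmf (geometric_pmf \<rho>)"
  proof (rule measure_eqI_countable[where A=UNIV])
    fix g :: nat
    have "emeasure (distr M (count_space UNIV) G) {g} = emeasure M (G -` {g} \<inter> space M)"
      by (rule emeasure_distr) auto
    also have "G -` {g} \<inter> space M = {w \<in> space M. G w = g}" by auto
    also have "emeasure M {w \<in> space M. G w = g} = ennreal (Pd ^ g * (1 - Pd))"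
      using assms(18)[of g] by (simp add: P.emeasure_eq_measure)
    also have "\<dots> = emeasure (measure_pmf (geometric_pmf \<rho>)) {g}"
      using assms(11) rp' by (simp add: emeasure_pmf_single)
    finally show "emeasure (distr M (count_space UNIV) G) {g} = emeasure (measure_pmf (geometric_pmf \<rho>)) {g}" .
  qed auto
  note GM = geom_moments[OF rp]
  have IG: "integrable M (\<lambda>w. real (G w))"
    using GM(1) integrable_distr_eq[OF Gm, of real] distrG by simp
  have IG2: "integrable M (\<lambda>w. (real (G w))\<^sup>2)"
    using GM(3) integrable_distr_eq[OF Gm, of "\<lambda>n. (real n)\<^sup>2"] distrG by simp
  have EG: "(\<integral>w. real (G w) \<partial>M) = (1 - \<rho>) / \<rho>"
    using GM(2) integral_distr[OF Gm, of real] distrG by simp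
  have EG2: "(\<integral>w. (real (G w))\<^sup>2 \<partial>M) = (1 - \<rho>) * (2 - \<rho>) / \<rho>\<^sup>2"
    using GM(4) integral_distr[OF Gm, of "\<lambda>n. (real n)\<^sup>2"] distrG by simp
  have IGD: "integrable M (\<lambda>w. real (G w) * Dq w)"
    and EGD: "(\<integral>w. real (G w) * Dq w \<partial>M) = (\<integral>w. real (G w) \<partial>M) * (\<integral>w. Dq w \<partial>M)"
    using P.indep_var_integrable[OF assms(17) IG intD] P.indep_var_lebesgue_integral[OF assms(17) IG intD]
    by auto
  define m1 where "m1 = (\<integral>w. Dq w \<partial>M)"
  define m2 where "m2 = (\<integral>w. (Dq w)\<^sup>2 \<partial>M)"
  define EGv where "EGv = (1 - \<rho>) / \<rho>"
  define EG2v where "EG2v = (1 - \<rho>) * (2 - \<rho>) / \<rho>\<^sup>2"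
  have hG: "has_bochner_integral M (\<lambda>w. real (G w)) EGv"
    using has_bochner_integral_integrable[OF IG] EG unfolding EGv_def by simp
  have hG2: "has_bochner_integral M (\<lambda>w. (real (G w))\<^sup>2) EG2v"
    using has_bochner_integral_integrable[OF IG2] EG2 unfolding EG2v_def by simp
  have hD: "has_bochner_integral M (\<lambda>w. Dq w) m1"
    using has_bochner_integral_integrable[OF intD] unfolding m1_def by simp
  have hD2: "has_bochner_integral M (\<lambda>w. (Dq w)\<^sup>2) m2"
    using has_bochner_integral_integrable[OF intD2] unfolding m2_def by simp
  have hGD: "has_bochner_integral M (\<lambda>w. real (G w) * Dq w) (EGv * m1)"
    using has_bochner_integral_integrable[OF IGD] EGD EG unfolding EGv_def m1_def by simp
  have hC: "has_bochner_integral M (\<lambda>w. c) c" for c :: real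
    using has_bochner_integral_integrable[of M "\<lambda>w. c"] by (simp add: P.prob_space)
  have hmu: "has_bochner_integral M (\<lambda>w. a * real (G w) + Dq w) (a * EGv + m1)"
    by (intro has_bochner_integral_add has_bochner_integral_mult_right hG hD)
  then have mu: "(\<integral>w. a * real (G w) + Dq w \<partial>M) = a * EGv + m1"
    by (rule has_bochner_integral_integral_eq)
  define mu where "mu = a * EGv + m1"
  have hV: "has_bochner_integral M
      (\<lambda>w. a\<^sup>2 * (real (G w))\<^sup>2 + 2 * a * (real (G w) * Dq w) + (Dq w)\<^sup>2
           - 2 * mu * a * real (G w) - 2 * mu * Dq w + mu\<^sup>2)
      (a\<^sup>2 * EG2v + 2 * a * (EGv * m1) + m2 - 2 * mu * a * EGv - 2 * mu * m1 + mu\<^sup>2)"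
    by (intro has_bochner_integral_add has_bochner_integral_diff has_bochner_integral_mult_right
        hG hG2 hD hD2 hGD hC)
  have V: "(\<integral>w. (a * real (G w) + Dq w - mu)\<^sup>2 \<partial>M)
      = a\<^sup>2 * EG2v + 2 * a * (EGv * m1) + m2 - 2 * mu * a * EGv - 2 * mu * m1 + mu\<^sup>2"
  proof -
    have "(\<lambda>w. (a * real (G w) + Dq w - mu)\<^sup>2) = (\<lambda>w. a\<^sup>2 * (real (G w))\<^sup>2 + 2 * a * (real (G w) * Dq w) + (Dq w)\<^sup>2
           - 2 * mu * a * real (G w) - 2 * mu * Dq w + mu\<^sup>2)"
      by (rule ext) (simp add: power2_eq_square algebra_simps)
    then show ?thesis using has_bochner_integral_integral_eq[OF hV] by simp
  qed
  have hVD: "has_bochner_integral M (\<lambda>w. (Dq w)\<^sup>2 - 2 * m1 * Dq w + m1\<^sup>2) (m2 - 2 * m1 * m1 + m1\<^sup>2)"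
    by (intro has_bochner_integral_add has_bochner_integral_diff has_bochner_integral_mult_right hD hD2 hC)
  have VD: "(\<integral>w. (Dq w - m1)\<^sup>2 \<partial>M) = m2 - 2 * m1 * m1 + m1\<^sup>2"
  proof -
    have "(\<lambda>w. (Dq w - m1)\<^sup>2) = (\<lambda>w. (Dq w)\<^sup>2 - 2 * m1 * Dq w + m1\<^sup>2)"
      by (rule ext) (simp add: power2_eq_square algebra_simps)
    then show ?thesis using has_bochner_integral_integral_eq[OF hVD] by simp
  qed
  have fin: "a\<^sup>2 * EG2v + 2 * a * (EGv * m1) + m2 - 2 * mu * a * EGv - 2 * mu * m1 + mu\<^sup>2
      = a\<^sup>2 * (1 - \<rho>) / \<rho>\<^sup>2 + (m2 - 2 * m1 * m1 + m1\<^sup>2)"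
    unfolding mu_def EGv_def EG2v_def using nz by (simp add: divide_simps) algebra
  show ?thesis
    unfolding mu mu_def[symmetric] V VD[unfolded m1_def] EDq[symmetric] EDq2[symmetric]
    using fin EGv_def m1_def m2_def mu_def by simp
qed

end
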